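(* For every integer $k\ge 2$ and every $0<\varepsilon\le 1$ there exists a positive integer $N(k,\varepsilon)$ such that the following holds. If $n$ is a positive integer, $A$ is an alphabet with $|A|=k$ and $D\subseteq A^n$, then there exist a positive integer $M\le N(k,\varepsilon)$, a partition $\mathcal{P}$ of $A^n$ with $\mathcal{P}\subseteq\mathcal{S}(A^n)$ and $|\mathcal{P}|=M$, and a subfamily $\mathcal{P}'\subseteq\mathcal{P}$ with $\mathbb{P}(\bigcup\mathcal{P}')\ge 1-\varepsilon$ such that $|\mathbb{P}_T(D)-\mathbb{P}_S(D)|\le\varepsilon$ for every $S\in\mathcal{P}'$ and every $T\subseteq S$ with $T\in\mathcal{S}(A^n)$ and $|T|\ge\varepsilon|S|$.
   Context: $A$ is a finite set, $A^n$ the set of sequences $(a_0,\dots,a_{n-1})$ with entries in $A$; $\mathbb{P}$ is the uniform probability measure on $A^n$, and for nonempty $S\subseteq A^n$, $\mathbb{P}_S(X)=|X\cap S|/|S|$. For distinct $a,b\in A$, $z,y\in A^n$ are $(a,b)$-equivalent if for every coordinate $i$ and every $\gamma\in A\setminus\{a,b\}$, $z_i=\gamma$ iff $y_i=\gamma$. A set $X\subseteq A^n$ is $(a,b)$-insensitive if it is a union of $(a,b)$-equivalence classes. $\mathcal{S}(A^n)$ is the family of all sets of the form $\bigcap_{\{a,b\}} X_{\{a,b\}}$, the intersection over all 2-element subsets $\{a,b\}$ of $A$, where each $X_{\{a,b\}}$ is $(a,b)$-insensitive. $\mathcal{P}\subseteq\mathcal{S}(A^n)$ means every member of the partition lies in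 $\mathcal{S}(A^n)$. *)

theory Defs
  imports Complex_Main "HOL-Library.FuncSet"
begin

definition cube :: "'a set \<Rightarrow> nat \<Rightarrow> (nat \<Rightarrow> 'a) set" where
  "cube A n = ({..<n} \<rightarrow>\<^sub>E A)"

definition unif_prob :: "'a set \<Rightarrow> nat \<Rightarrow> (nat \<Rightarrow> 'a) set \<Rightarrow> real" where
  "unif_prob A n X = real (card (X \<inter> cube A n)) / real (card (cube A n))"

definition cond_prob :: "(nat \<Rightarrow> 'a) set \<Rightarrow> (nat \<Rightarrow> 'a) set \<Rightarrow> real" where
  "cond_prob S X = real (card (X \<inter> S)) / real (card S)"

definition ab_equiv :: "'a set \<Rightarrow> nat \<Rightarrow> 'a \<Rightarrow> 'a \<Rightarrow> (nat \<Rightarrow> 'a) \<Rightarrow> (nat \<Rightarrow> 'a) \<Rightarrow> bool" where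
  "ab_equiv A n a b z y \<longleftrightarrow>
     (\<forall>i<n. \<forall>\<gamma>\<in>A - {a, b}. (z i = \<gamma>) \<longleftrightarrow> (y i = \<gamma>))"

definition ab_insensitive :: "'a set \<Rightarrow> nat \<Rightarrow> 'a \<Rightarrow> 'a \<Rightarrow> (nat \<Rightarrow> 'a) set \<Rightarrow> bool" where
  "ab_insensitive A n a b X \<longleftrightarrow>
     X \<subseteq> cube A n \<and> (\<forall>z\<in>X. \<forall>y\<in>cube A n. ab_equiv A n a b z y \<longrightarrow> y \<in> X)"

definition S_family :: "'a set \<Rightarrow> nat \<Rightarrow> (nat \<Rightarrow> 'a) set set" where
  "S_family A n = {Y. \<exists>F :: 'a set \<Rightarrow> (nat \<Rightarrow> 'a) set.
      (\<forall>a\<in>A. \<forall>b\<in>A. a \<noteq> b \<longrightarrow> ab_insensitive A n a b (F {a, b})) \<and>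
      Y = cube A n \<inter> (\<Inter>{F {a, b} | a b. a \<in> A \<and> b \<in> A \<and> a \<noteq> b})}"

definition is_partition :: "'b set \<Rightarrow> 'b set set \<Rightarrow> bool" where
  "is_partition U P \<longleftrightarrow> \<Union>P = U \<and> (\<forall>X\<in>P. X \<noteq> {}) \<and>
     (\<forall>X\<in>P. \<forall>Y\<in>P. X \<noteq> Y \<longrightarrow> X \<inter> Y = {})"

end

theory Submission
  imports Defs
begin

lemma ab_equiv_sym: "ab_equiv A n a b z y \<Longrightarrow> ab_equiv A n a b y z"
  unfolding ab_equiv_def by metis

lemma ins_cube: "ab_insensitive A n a b (cube A n)"
  unfolding ab_insensitive_def by auto

lemma ins_Int: "ab_insensitive A n a b X \<Longrightarrow> ab_insensitive A n a b Y \<Longrightarrow> ab_insensitive A n a b (X \<inter> Y)"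
  unfolding ab_insensitive_def by blast

lemma ins_compl: assumes X: "ab_insensitive A n a b X" shows "ab_insensitive A n a b (cube A n - X)"
  unfolding ab_insensitive_def
proof (intro conjI ballI impI)
  fix z y assume z: "z \<in> cube A n - X" and y: "y \<in> cube A n" and e: "ab_equiv A n a b z y"
  show "y \<in> cube A n - X"
  proof
    show "y \<in> cube A n" by (rule y)
    show "y \<notin> X"
    proof
      assume "y \<in> X"
      then have "z \<in> X" using X z ab_equiv_sym[OF e] unfolding ab_insensitive_def by blast
      then show False using z by blast
    qed
  qed
qed simp

lemma S_family_sub: "Y \<in> S_family A n \<Longrightarrow> Y \<subseteq> cube A n"
  unfolding S_family_def by auto

lemma cube_in_S: "cube A n \<in> S_family A n"
  unfolding S_family_def
  by (rule CollectI, rule exI[of _ "\<lambda>_. cube A n"]) (auto simp: ins_cube)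

lemma mem_Inter_pairs: "y \<in> \<Inter>{H {a, b} | a b. a \<in> A \<and> b \<in> A \<and> a \<noteq> b} \<longleftrightarrow> (\<forall>a\<in>A. \<forall>b\<in>A. a \<noteq> b \<longrightarrow> y \<in> H {a, b})"
  by blast


lemma atoms:
  assumes fin: "finite A" and S: "S \<in> S_family A n" and T: "T \<in> S_family A n"
    and TS: "T \<subseteq> S" and Tne: "T \<noteq> {}"
  shows "\<exists>Q. is_partition S Q \<and> Q \<subseteq> S_family A n \<and> T \<in> Q \<and> card Q \<le> 2 ^ (card A * card A)"
proof -
  obtain F where F: "\<forall>a\<in>A. \<forall>b\<in>A. a \<noteq> b \<longrightarrow> ab_insensitive A n a b (F {a, b})"
    and SF: "S = cube A n \<inter> (\<Inter>{F {a, b} | a b. a \<in> A \<and> b \<in> A \<and> a \<noteq> b})"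
    using S unfolding S_family_def by blast
  obtain G where G: "\<forall>a\<in>A. \<forall>b\<in>A. a \<noteq> b \<longrightarrow> ab_insensitive A n a b (G {a, b})"
    and TG: "T = cube A n \<inter> (\<Inter>{G {a, b} | a b. a \<in> A \<and> b \<in> A \<and> a \<noteq> b})"
    using T unfolding S_family_def by blast
  define pat where "pat y = {(a,b). (a,b) \<in> A \<times> A \<and> a \<noteq> b \<and> y \<in> G {a,b}}" for y
  define blk where "blk q = {y\<in>S. pat y = q}" for q
  define Q where "Q = blk ` (pat ` S)"
  have part: "is_partition S Q"
    unfolding is_partition_def Q_def blk_def by auto
  have cardQ: "card Q \<le> 2 ^ (card A * card A)"
  proof -
    have "card Q \<le> card (pat ` S)" unfolding Q_def by (rule card_image_le) (use S_family_sub[OF S] in \<open>simp add: cube_def finite_PiE fin finite_subset\<close>)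
    also have "\<dots> \<le> card (Pow (A \<times> A))"
      by (rule card_mono) (auto simp: fin pat_def)
    also have "\<dots> = 2 ^ (card A * card A)" by (simp add: card_Pow fin card_cartesian_product)
    finally show ?thesis .
  qed
  have blkeq: "blk (pat x) = {y\<in>S. \<forall>a\<in>A. \<forall>b\<in>A. a \<noteq> b \<longrightarrow> (y \<in> G{a,b} \<longleftrightarrow> x \<in> G{a,b})}" for x
    unfolding blk_def pat_def by (auto simp: set_eq_iff)
  have inS: "blk (pat x) \<in> S_family A n" for x
  proof -
    define F' where "F' p = F p \<inter> (if x \<in> G p then G p else cube A n - G p)" for p
    have insF': "\<forall>a\<in>A. \<forall>b\<in>A. a \<noteq> b \<longrightarrow> ab_insensitive A n a b (F' {a, b})"
      using F G by (auto simp: F'_def intro!: ins_Int ins_compl)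
    have F'mem: "y \<in> cube A n \<Longrightarrow> y \<in> F' p \<longleftrightarrow> y \<in> F p \<and> (y \<in> G p \<longleftrightarrow> x \<in> G p)" for y p
      by (auto simp: F'_def)
    have eqF': "blk (pat x) = cube A n \<inter> (\<Inter>{F' {a, b} | a b. a \<in> A \<and> b \<in> A \<and> a \<noteq> b})"
    proof (rule set_eqI)
      fix y show "y \<in> blk (pat x) \<longleftrightarrow> y \<in> cube A n \<inter> (\<Inter>{F' {a, b} | a b. a \<in> A \<and> b \<in> A \<and> a \<noteq> b})"
        unfolding blkeq SF mem_Collect_eq Int_iff mem_Inter_pairs using F'mem by blast
    qed
    show ?thesis unfolding S_family_def
      by (rule CollectI, rule exI[of _ F'], rule conjI[OF insF' eqF'])
  qed
  obtain t where t: "t \<in> T" using Tne by blast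
  have "T = blk (pat t)"
  proof (rule set_eqI)
    fix y show "y \<in> T \<longleftrightarrow> y \<in> blk (pat t)"
    proof -
      have Tm: "z \<in> T \<longleftrightarrow> z \<in> cube A n \<and> (\<forall>a\<in>A. \<forall>b\<in>A. a \<noteq> b \<longrightarrow> z \<in> G {a, b})" for z
        unfolding TG Int_iff mem_Inter_pairs by (rule refl)
      have tG: "\<forall>a\<in>A. \<forall>b\<in>A. a \<noteq> b \<longrightarrow> t \<in> G {a, b}" using Tm t by blast
      have "y \<in> blk (pat t) \<longleftrightarrow> y \<in> S \<and> (\<forall>a\<in>A. \<forall>b\<in>A. a \<noteq> b \<longrightarrow> y \<in> G {a, b})"
        unfolding blkeq mem_Collect_eq using tG by blast
      then show ?thesis using Tm TS S_family_sub[OF S] by blast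
    qed
  qed
  moreover have "pat t \<in> pat ` S" using t TS by blast
  ultimately have TQ: "T \<in> Q" unfolding Q_def by blast
  have QS: "Q \<subseteq> S_family A n" unfolding Q_def using inS by blast
  show ?thesis by (rule exI[of _ Q], intro conjI part QS TQ cardQ)
qed

definition en :: "'b set \<Rightarrow> 'b set \<Rightarrow> real" where
  "en D X = real (card (D \<inter> X)) ^ 2 / real (card X)"

lemma part_finite: "is_partition S Q \<Longrightarrow> finite S \<Longrightarrow> finite Q"
  unfolding is_partition_def by (metis Sup_upper finite_Pow_iff finite_subset subsetI PowI)

lemma part_sub: "is_partition S Q \<Longrightarrow> X \<in> Q \<Longrightarrow> X \<subseteq> S"
  unfolding is_partition_def by blast

lemma part_card_pos: assumes "is_partition S Q" "finite S" "X \<in> Q" shows "0 < card X"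
proof -
  have "X \<noteq> {}" using assms unfolding is_partition_def by blast
  moreover have "finite X" using part_sub[OF assms(1,3)] assms(2) by (rule finite_subset)
  ultimately show ?thesis by auto
qed

lemma part_Union: "is_partition S Q \<Longrightarrow> \<Union>Q = S" unfolding is_partition_def by blast
lemma part_ne: "is_partition S Q \<Longrightarrow> X \<in> Q \<Longrightarrow> X \<noteq> {}" unfolding is_partition_def by blast
lemma part_disj: "is_partition S Q \<Longrightarrow> X \<in> Q \<Longrightarrow> Y \<in> Q \<Longrightarrow> X \<noteq> Y \<Longrightarrow> X \<inter> Y = {}"
  unfolding is_partition_def by blast
lemma part_eq: "is_partition S Q \<Longrightarrow> X \<in> Q \<Longrightarrow> Y \<in> Q \<Longrightarrow> X \<inter> Y \<noteq> {} \<Longrightarrow> X = Y"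
  using part_disj by blast

lemma part_cardD_sum:
  assumes "is_partition S Q" "finite S"
  shows "(\<Sum>X\<in>Q. card (D \<inter> X)) = card (D \<inter> S)"
proof -
  have "card (\<Union>((\<lambda>X. D \<inter> X) ` Q)) = (\<Sum>X\<in>Q. card (D \<inter> X))"
  proof (rule card_UN_disjoint)
    show "finite Q" using part_finite[OF assms] .
    show "\<forall>X\<in>Q. finite (D \<inter> X)" using part_sub[OF assms(1)] assms(2) finite_subset by blast
    show "\<forall>X\<in>Q. \<forall>Y\<in>Q. X \<noteq> Y \<longrightarrow> D \<inter> X \<inter> (D \<inter> Y) = {}" using part_disj[OF assms(1)] by blast
  qed
  moreover have "\<Union>((\<lambda>X. D \<inter> X) ` Q) = D \<inter> S" using part_Union[OF assms(1)] by blast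
  ultimately show ?thesis by simp
qed

lemma part_card_sum:
  assumes "is_partition S Q" "finite S"
  shows "(\<Sum>X\<in>Q. card X) = card S"
  using part_cardD_sum[OF assms, of S] part_sub[OF assms(1)]
  by (metis (no_types, lifting) Int_absorb1 Int_absorb sum.cong)

lemma en_le: "finite X \<Longrightarrow> en D X \<le> real (card X)"
proof -
  assume f: "finite X"
  have m: "real (card (D \<inter> X)) \<le> real (card X)" using f by (simp add: card_mono)
  show ?thesis
  proof (cases "card X = 0")
    case True then show ?thesis by (simp add: en_def)
  next
    case False
    then have c: "real (card X) > 0" by simp
    have "real (card (D \<inter> X)) ^ 2 \<le> real (card X) ^ 2"
      using m by (simp add: power_mono)
    then show ?thesis unfolding en_def using c by (simp add: divide_le_eq power2_eq_square)
  qed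
qed

lemma energy_le:
  assumes "is_partition S Q" "finite S"
  shows "(\<Sum>X\<in>Q. en D X) \<le> real (card S)"
proof -
  have "(\<Sum>X\<in>Q. en D X) \<le> (\<Sum>X\<in>Q. real (card X))"
  proof (rule sum_mono)
    fix X assume "X \<in> Q"
    then have "finite X" using part_sub[OF assms(1)] assms(2) finite_subset by blast
    then show "en D X \<le> real (card X)" by (rule en_le)
  qed
  also have "\<dots> = real (card S)" using part_card_sum[OF assms] by (simp only: of_nat_sum[symmetric])
  finally show ?thesis .
qed

lemma refine_gain:
  assumes fS: "finite S" and P: "is_partition S Q" and T: "T \<in> Q"
  shows "(\<Sum>X\<in>Q. en D X) - en D S \<ge> real (card T) * (cond_prob T D - cond_prob S D)^2"
proof -
  have fQ: "finite Q" using part_finite[OF P fS] .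
  have cpos: "X \<in> Q \<Longrightarrow> real (card X) > 0" for X using part_card_pos[OF P fS] by simp
  have cS: "real (card S) > 0"
    using cpos[OF T] part_sub[OF P T] fS by (metis card_mono of_nat_0_less_iff order_less_le_trans)
  define d where "d X = real (card (D \<inter> X)) / real (card X)" for X
  have cp: "cond_prob X D = d X" for X unfolding cond_prob_def d_def by (simp add: Int_commute)
  define s where "s = d S"
  have pw: "real (card X) * (d X - s)^2 = en D X - 2 * s * real (card (D \<inter> X)) + s^2 * real (card X)"
    if "X \<in> Q" for X
    using cpos[OF that] unfolding d_def en_def by (simp add: field_simps power2_eq_square)
  have "(\<Sum>X\<in>Q. real (card X) * (d X - s)^2) =
      (\<Sum>X\<in>Q. en D X - 2 * s * real (card (D \<inter> X)) + s^2 * real (card X))"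
    using pw by (rule sum.cong[OF refl])
  also have "\<dots> = (\<Sum>X\<in>Q. en D X) - 2 * s * (\<Sum>X\<in>Q. real (card (D \<inter> X))) + s^2 * (\<Sum>X\<in>Q. real (card X))"
    by (simp add: sum.distrib sum_subtractf sum_distrib_left)
  also have "\<dots> = (\<Sum>X\<in>Q. en D X) - 2 * s * real (card (D \<inter> S)) + s^2 * real (card S)"
    using part_cardD_sum[OF P fS, of D] part_card_sum[OF P fS] by (metis of_nat_sum)
  also have "\<dots> = (\<Sum>X\<in>Q. en D X) - en D S"
    using cS unfolding s_def d_def en_def by (simp add: field_simps power2_eq_square)
  finally have eq: "(\<Sum>X\<in>Q. real (card X) * (d X - s)^2) = (\<Sum>X\<in>Q. en D X) - en D S" .
  have "real (card T) * (d T - s)^2 \<le> (\<Sum>X\<in>Q. real (card X) * (d X - s)^2)"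
    by (rule member_le_sum[OF T _ fQ]) simp
  then show ?thesis using eq cp s_def by simp
qed

lemma refine_disj:
  assumes P: "is_partition U P" and B: "B \<subseteq> P" and Q: "\<And>S. S \<in> B \<Longrightarrow> is_partition S (Q S)"
  shows "(P - B) \<inter> \<Union>(Q ` B) = {}"
    and "\<And>S S'. S \<in> B \<Longrightarrow> S' \<in> B \<Longrightarrow> S \<noteq> S' \<Longrightarrow> Q S \<inter> Q S' = {}"
proof -
  show "(P - B) \<inter> \<Union>(Q ` B) = {}"
  proof (rule ccontr)
    assume "(P - B) \<inter> \<Union>(Q ` B) \<noteq> {}"
    then obtain X S where X: "X \<in> P" "X \<notin> B" "S \<in> B" "X \<in> Q S" by blast
    have ne: "X \<noteq> {}" using part_ne[OF Q[OF X(3)] X(4)] .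
    have sub: "X \<subseteq> S" using part_sub[OF Q[OF X(3)] X(4)] .
    have SP: "S \<in> P" using B X(3) by blast
    have "X \<inter> S \<noteq> {}" using ne sub by blast
    then have "X = S" using part_eq[OF P X(1) SP] by blast
    then show False using X by blast
  qed
  show "Q S \<inter> Q S' = {}" if SB: "S \<in> B" "S' \<in> B" "S \<noteq> S'" for S S'
  proof (rule ccontr)
    assume "Q S \<inter> Q S' \<noteq> {}"
    then obtain X where X: "X \<in> Q S" "X \<in> Q S'" by blast
    have "X \<noteq> {}" using part_ne[OF Q[OF SB(1)] X(1)] .
    moreover have "X \<subseteq> S" using part_sub[OF Q[OF SB(1)] X(1)] .
    moreover have "X \<subseteq> S'" using part_sub[OF Q[OF SB(2)] X(2)] .
    moreover have "S \<inter> S' = {}" using part_disj[OF P _ _ SB(3)] SB B by blast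
    ultimately show False by blast
  qed
qed

lemma refine_partition:
  assumes P: "is_partition U P" and B: "B \<subseteq> P" and Q: "\<And>S. S \<in> B \<Longrightarrow> is_partition S (Q S)"
  shows "is_partition U ((P - B) \<union> \<Union>(Q ` B))"
proof -
  let ?R = "(P - B) \<union> \<Union>(Q ` B)"
  have QU: "\<Union>(Q S) = S" if "S \<in> B" for S using part_Union[OF Q[OF that]] .
  have u1: "\<Union>(\<Union>(Q ` B)) = \<Union>B"
  proof (rule set_eqI)
    fix x show "x \<in> \<Union>(\<Union>(Q ` B)) \<longleftrightarrow> x \<in> \<Union>B"
    proof
      assume "x \<in> \<Union>(\<Union>(Q ` B))"
      then obtain S X where "S \<in> B" "X \<in> Q S" "x \<in> X" by blast
      then show "x \<in> \<Union>B" using QU by blast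
    next
      assume "x \<in> \<Union>B"
      then obtain S where S: "S \<in> B" "x \<in> S" by blast
      then have "x \<in> \<Union>(Q S)" using QU by simp
      then show "x \<in> \<Union>(\<Union>(Q ` B))" using S by blast
    qed
  qed
  have "\<Union>?R = \<Union>(P - B) \<union> \<Union>B" by (simp only: Union_Un_distrib u1)
  also have "\<dots> = \<Union>P" using B by blast
  also have "\<dots> = U" using part_Union[OF P] .
  finally have U: "\<Union>?R = U" .
  have ne: "X \<noteq> {}" if XR: "X \<in> ?R" for X
  proof (cases "X \<in> P - B")
    case True then show ?thesis using part_ne[OF P] by blast
  next
    case False then obtain S where "S \<in> B" "X \<in> Q S" using XR by blast
    then show ?thesis using part_ne[OF Q] by blast
  qed
  have dj: "X \<inter> Y = {}" if X: "X \<in> ?R" and Y: "Y \<in> ?R" and XY: "X \<noteq> Y" for X Y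
  proof -
    have cases: "(Z \<in> P - B) \<or> (\<exists>S\<in>B. Z \<in> Q S)" if "Z \<in> ?R" for Z using that by blast
    show ?thesis
    proof (cases "X \<in> P - B")
      case XP: True
      show ?thesis
      proof (cases "Y \<in> P - B")
        case True then show ?thesis using part_disj[OF P] XP XY by blast
      next
        case False then obtain S where S: "S \<in> B" "Y \<in> Q S" using cases[OF Y] by blast
        have "Y \<subseteq> S" using part_sub[OF Q[OF S(1)] S(2)] .
        moreover have "X \<inter> S = {}" using part_disj[OF P] XP S(1) B by blast
        ultimately show ?thesis by blast
      qed
    next
      case XnP: False
      then obtain S where S: "S \<in> B" "X \<in> Q S" using cases[OF X] by blast
      have XS: "X \<subseteq> S" using part_sub[OF Q[OF S(1)] S(2)] .
      show ?thesis
      proof (cases "Y \<in> P - B")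
        case True
        moreover have "Y \<inter> S = {}" using part_disj[OF P] True S(1) B by blast
        ultimately show ?thesis using XS by blast
      next
        case False then obtain S' where S': "S' \<in> B" "Y \<in> Q S'" using cases[OF Y] by blast
        have YS: "Y \<subseteq> S'" using part_sub[OF Q[OF S'(1)] S'(2)] .
        show ?thesis
        proof (cases "S = S'")
          case True then show ?thesis using part_disj[OF Q[OF S(1)] S(2)] S'(2) XY by blast
        next
          case False
          then have "S \<inter> S' = {}" using part_disj[OF P] S(1) S'(1) B by blast
          then show ?thesis using XS YS by blast
        qed
      qed
    qed
  qed
  show ?thesis unfolding is_partition_def using U ne dj by blast
qed

lemma refine_sum:
  assumes fU: "finite U" and P: "is_partition U P" and B: "B \<subseteq> P" and Q: "\<And>S. S \<in> B \<Longrightarrow> is_partition S (Q S)"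
  shows "(\<Sum>X\<in>(P - B) \<union> \<Union>(Q ` B). f X) = (\<Sum>X\<in>P - B. f X) + (\<Sum>S\<in>B. \<Sum>X\<in>Q S. f X)"
proof -
  have fP: "finite P" using part_finite[OF P fU] .
  have fB: "finite B" using fP B finite_subset by blast
  have fQ: "S \<in> B \<Longrightarrow> finite (Q S)" for S
    using part_finite[OF Q] part_sub[OF P] B fU finite_subset by blast
  have "(\<Sum>X\<in>(P - B) \<union> \<Union>(Q ` B). f X) = (\<Sum>X\<in>P - B. f X) + (\<Sum>X\<in>\<Union>(Q ` B). f X)"
    by (rule sum.union_disjoint) (use fP fB fQ refine_disj(1)[OF P B Q] in auto)
  also have "(\<Sum>X\<in>\<Union>(Q ` B). f X) = (\<Sum>S\<in>B. \<Sum>X\<in>Q S. f X)"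
    by (rule sum.UNION_disjoint) (use fB fQ refine_disj(2)[OF P B Q] in auto)
  finally show ?thesis .
qed

lemma refine_card:
  assumes fU: "finite U" and P: "is_partition U P" and B: "B \<subseteq> P"
  shows "card ((P - B) \<union> \<Union>(Q ` B)) \<le> card (P - B) + (\<Sum>S\<in>B. card (Q S))"
proof -
  have fB: "finite B" using part_finite[OF P fU] B finite_subset by blast
  have "card ((P - B) \<union> \<Union>(Q ` B)) \<le> card (P - B) + card (\<Union>(Q ` B))" by (rule card_Un_le)
  also have "card (\<Union>(Q ` B)) \<le> (\<Sum>S\<in>B. card (Q S))" using card_UN_le[OF fB] .
  finally show ?thesis by simp
qed

definition good :: "'a set \<Rightarrow> nat \<Rightarrow> (nat \<Rightarrow> 'a) set \<Rightarrow> real \<Rightarrow> (nat \<Rightarrow> 'a) set \<Rightarrow> bool" where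
  "good A n D \<epsilon> S \<longleftrightarrow> (\<forall>T. T \<subseteq> S \<and> T \<in> S_family A n \<and> real (card T) \<ge> \<epsilon> * real (card S) \<longrightarrow>
            \<bar>cond_prob T D - cond_prob S D\<bar> \<le> \<epsilon>)"

lemma sub_part: "is_partition U P \<Longrightarrow> B \<subseteq> P \<Longrightarrow> is_partition (\<Union>B) B"
  unfolding is_partition_def by blast

lemma finite_cube: "finite A \<Longrightarrow> finite (cube A n)"
  unfolding cube_def by (rule finite_PiE) auto

lemma cube_ne: "A \<noteq> {} \<Longrightarrow> cube A n \<noteq> {}"
  unfolding cube_def by (simp add: PiE_eq_empty_iff)

lemma step:
  assumes fA: "finite A" and Ane: "A \<noteq> {}" and e0: "0 < \<epsilon>" and e1: "\<epsilon> \<le> 1"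
    and P: "is_partition (cube A n) P" and PS: "P \<subseteq> S_family A n"
    and nf: "\<not> (unif_prob A n (\<Union>{S\<in>P. good A n D \<epsilon> S}) \<ge> 1 - \<epsilon>)"
  shows "\<exists>P2. is_partition (cube A n) P2 \<and> P2 \<subseteq> S_family A n \<and>
     card P2 \<le> card P * 2 ^ (card A * card A) \<and>
     (\<Sum>X\<in>P2. en D X) \<ge> (\<Sum>X\<in>P. en D X) + \<epsilon> ^ 4 * real (card (cube A n))"
proof -
  define U where "U = cube A n"
  define R :: nat where "R = 2 ^ (card A * card A)"
  have fU: "finite U" unfolding U_def using finite_cube[OF fA] .
  have cU: "real (card U) > 0" unfolding U_def using cube_ne[OF Ane] finite_cube[OF fA] by (simp add: card_gt_0_iff)
  have fP: "finite P" using part_finite[OF P[folded U_def] fU] .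
  define G where "G = {S\<in>P. good A n D \<epsilon> S}"
  define B where "B = P - G"
  have GP: "G \<subseteq> P" unfolding G_def by blast
  have BP: "B \<subseteq> P" unfolding B_def by blast
  have PG: "P - B = G" unfolding B_def G_def by blast
  have badS: "\<exists>T. T \<subseteq> S \<and> T \<in> S_family A n \<and> real (card T) \<ge> \<epsilon> * real (card S) \<and>
      \<bar>cond_prob T D - cond_prob S D\<bar> > \<epsilon>" if "S \<in> B" for S
    using that unfolding B_def G_def good_def by (auto simp: not_le)
  then obtain Tf where Tf: "\<forall>S\<in>B. Tf S \<subseteq> S \<and> Tf S \<in> S_family A n \<and> real (card (Tf S)) \<ge> \<epsilon> * real (card S) \<and>
      \<bar>cond_prob (Tf S) D - cond_prob S D\<bar> > \<epsilon>"
    using bchoice[of B "\<lambda>S T. T \<subseteq> S \<and> T \<in> S_family A n \<and> real (card T) \<ge> \<epsilon> * real (card S) \<and>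
      \<bar>cond_prob T D - cond_prob S D\<bar> > \<epsilon>"] by blast
  have cSpos: "real (card S) > 0" if "S \<in> P" for S
    using part_card_pos[OF P[folded U_def] fU that] by simp
  have exQ: "\<exists>Q. is_partition S Q \<and> Q \<subseteq> S_family A n \<and> Tf S \<in> Q \<and> card Q \<le> R" if SB: "S \<in> B" for S
  proof -
    have SP: "S \<in> P" using SB BP by blast
    have "real (card (Tf S)) > 0"
      using Tf SB cSpos[OF SP] e0 by (meson mult_pos_pos order_less_le_trans)
    then have "Tf S \<noteq> {}" by auto
    moreover have "S \<in> S_family A n" using SP PS by blast
    moreover have "Tf S \<in> S_family A n" "Tf S \<subseteq> S" using Tf SB by blast+
    ultimately show ?thesis using atoms[OF fA] unfolding R_def by blast
  qed
  then obtain Qf where Qf: "\<forall>S\<in>B. is_partition S (Qf S) \<and> Qf S \<subseteq> S_family A n \<and> Tf S \<in> Qf S \<and> card (Qf S) \<le> R"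
    using bchoice[of B "\<lambda>S Q. is_partition S Q \<and> Q \<subseteq> S_family A n \<and> Tf S \<in> Q \<and> card Q \<le> R"] by blast
  have QfP: "\<And>S. S \<in> B \<Longrightarrow> is_partition S (Qf S)" using Qf by blast
  define P2 where "P2 = (P - B) \<union> \<Union>(Qf ` B)"
  have P2part: "is_partition U P2" unfolding P2_def using refine_partition[OF P[folded U_def] BP QfP] .
  have P2S: "P2 \<subseteq> S_family A n" unfolding P2_def using PS Qf by blast
  have fB: "finite B" using fP BP finite_subset by blast
  have "card P2 \<le> card (P - B) + (\<Sum>S\<in>B. card (Qf S))"
    unfolding P2_def by (rule refine_card[OF fU P[folded U_def] BP])
  also have "(\<Sum>S\<in>B. card (Qf S)) \<le> (\<Sum>S\<in>B. R)" by (rule sum_mono) (use Qf in blast)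
  also have "(\<Sum>S\<in>B. R) = card B * R" by simp
  also have "card (P - B) + card B * R \<le> (card (P - B) + card B) * R"
    unfolding R_def by (simp add: add_mult_distrib)
  also have "card (P - B) + card B = card P" using card_Diff_subset[OF fB BP] card_mono[OF fP BP] by simp
  finally have cardP2: "card P2 \<le> card P * R" by simp
  have fS: "finite S" if "S \<in> P" for S using part_sub[OF P[folded U_def] that] fU finite_subset by blast
  have gainS: "(\<Sum>X\<in>Qf S. en D X) - en D S \<ge> \<epsilon> ^ 3 * real (card S)" if SB: "S \<in> B" for S
  proof -
    have SP: "S \<in> P" using SB BP by blast
    let ?x = "cond_prob (Tf S) D - cond_prob S D"
    have g: "(\<Sum>X\<in>Qf S. en D X) - en D S \<ge> real (card (Tf S)) * ?x ^ 2"
      using refine_gain[OF fS[OF SP] QfP[OF SB]] Qf SB by blast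
    have "\<epsilon> < \<bar>?x\<bar>" using Tf SB by blast
    then have "\<epsilon> ^ 2 \<le> \<bar>?x\<bar> ^ 2" using e0 by (intro power_mono) auto
    then have x2: "\<epsilon> ^ 2 \<le> ?x ^ 2" by simp
    have cT: "\<epsilon> * real (card S) \<le> real (card (Tf S))" using Tf SB by blast
    have "\<epsilon> ^ 3 * real (card S) = (\<epsilon> * real (card S)) * \<epsilon> ^ 2" by (simp add: power_def)
    also have "\<dots> \<le> real (card (Tf S)) * ?x ^ 2"
      by (rule mult_mono[OF cT x2]) (use e0 in auto)
    finally show ?thesis using g by linarith
  qed
  have eP: "(\<Sum>X\<in>P. en D X) = (\<Sum>X\<in>P - B. en D X) + (\<Sum>S\<in>B. en D S)"
    by (rule sum.subset_diff[OF BP fP])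
  have eP2: "(\<Sum>X\<in>P2. en D X) = (\<Sum>X\<in>P - B. en D X) + (\<Sum>S\<in>B. \<Sum>X\<in>Qf S. en D X)"
    unfolding P2_def by (rule refine_sum[OF fU P[folded U_def] BP QfP])
  have "(\<Sum>S\<in>B. \<epsilon> ^ 3 * real (card S)) \<le> (\<Sum>S\<in>B. (\<Sum>X\<in>Qf S. en D X) - en D S)"
    by (rule sum_mono) (rule gainS)
  also have "\<dots> = (\<Sum>S\<in>B. \<Sum>X\<in>Qf S. en D X) - (\<Sum>S\<in>B. en D S)" by (rule sum_subtractf)
  finally have inc: "\<epsilon> ^ 3 * (\<Sum>S\<in>B. real (card S)) \<le> (\<Sum>X\<in>P2. en D X) - (\<Sum>X\<in>P. en D X)"
    using eP eP2 by (simp add: sum_distrib_left)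
  have "\<Union>B \<subseteq> U" using part_sub[OF P[folded U_def]] BP by blast
  then have fUB: "finite (\<Union>B)" using fU finite_subset by blast
  have "\<Union>G \<subseteq> U" using part_sub[OF P[folded U_def]] GP by blast
  then have fUG: "finite (\<Union>G)" using fU finite_subset by blast
  have cB: "(\<Sum>S\<in>B. card S) = card (\<Union>B)" using part_card_sum[OF sub_part[OF P BP] fUB] .
  have cG: "(\<Sum>S\<in>G. card S) = card (\<Union>G)" using part_card_sum[OF sub_part[OF P GP] fUG] .
  have cP: "(\<Sum>S\<in>P. card S) = card U" using part_card_sum[OF P[folded U_def] fU] .
  have "(\<Sum>S\<in>P. card S) = (\<Sum>S\<in>P - B. card S) + (\<Sum>S\<in>B. card S)" by (rule sum.subset_diff[OF BP fP])
  then have sumU: "card U = card (\<Union>G) + card (\<Union>B)" using cB cG cP PG by simp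
  have UGsub: "\<Union>G \<subseteq> U" using part_sub[OF P[folded U_def]] GP by blast
  have "unif_prob A n (\<Union>G) = real (card (\<Union>G)) / real (card U)"
    unfolding unif_prob_def U_def using UGsub[unfolded U_def] by (simp add: Int_absorb2)
  then have "real (card (\<Union>G)) / real (card U) < 1 - \<epsilon>" using nf unfolding G_def by simp
  then have "real (card (\<Union>G)) < (1 - \<epsilon>) * real (card U)" using cU by (simp add: divide_less_eq)
  then have mB: "real (card (\<Union>B)) > \<epsilon> * real (card U)" using sumU by (simp add: algebra_simps)
  have "\<epsilon> ^ 4 * real (card U) = \<epsilon> ^ 3 * (\<epsilon> * real (card U))" by (simp add: power_def)
  also have "\<dots> \<le> \<epsilon> ^ 3 * real (card (\<Union>B))" using mB e0 by (intro mult_left_mono) auto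
  also have "\<dots> = \<epsilon> ^ 3 * (\<Sum>S\<in>B. real (card S))" using cB by (simp only: of_nat_sum[symmetric])
  finally have "\<epsilon> ^ 4 * real (card U) \<le> (\<Sum>X\<in>P2. en D X) - (\<Sum>X\<in>P. en D X)" using inc by linarith
  then show ?thesis using P2part P2S cardP2 unfolding U_def R_def
    by (intro exI[of _ P2]) (simp add: algebra_simps)
qed

lemma iter:
  assumes fA: "finite A" and Ane: "A \<noteq> {}" and e0: "0 < \<epsilon>" and e1: "\<epsilon> \<le> 1"
  shows "\<forall>P. is_partition (cube A n) P \<longrightarrow> P \<subseteq> S_family A n \<longrightarrow>
     (\<Sum>X\<in>P. en D X) + real r * \<epsilon> ^ 4 * real (card (cube A n)) > real (card (cube A n)) \<longrightarrow>
     (\<exists>P'. is_partition (cube A n) P' \<and> P' \<subseteq> S_family A n \<and>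
        card P' \<le> card P * (2 ^ (card A * card A)) ^ r \<and>
        unif_prob A n (\<Union>{S\<in>P'. good A n D \<epsilon> S}) \<ge> 1 - \<epsilon>)"
proof (induction r)
  case 0
  show ?case
  proof (intro allI impI)
    fix P assume P: "is_partition (cube A n) P" and
      E: "(\<Sum>X\<in>P. en D X) + real 0 * \<epsilon> ^ 4 * real (card (cube A n)) > real (card (cube A n))"
    have "(\<Sum>X\<in>P. en D X) \<le> real (card (cube A n))" by (rule energy_le[OF P finite_cube[OF fA]])
    then show "\<exists>P'. is_partition (cube A n) P' \<and> P' \<subseteq> S_family A n \<and>
        card P' \<le> card P * (2 ^ (card A * card A)) ^ 0 \<and>
        unif_prob A n (\<Union>{S\<in>P'. good A n D \<epsilon> S}) \<ge> 1 - \<epsilon>" using E by simp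
  qed
next
  case (Suc r)
  show ?case
  proof (intro allI impI)
    fix P assume P: "is_partition (cube A n) P" and PS: "P \<subseteq> S_family A n" and
      E: "(\<Sum>X\<in>P. en D X) + real (Suc r) * \<epsilon> ^ 4 * real (card (cube A n)) > real (card (cube A n))"
    let ?R = "2 ^ (card A * card A) :: nat"
    show "\<exists>P'. is_partition (cube A n) P' \<and> P' \<subseteq> S_family A n \<and>
        card P' \<le> card P * ?R ^ Suc r \<and>
        unif_prob A n (\<Union>{S\<in>P'. good A n D \<epsilon> S}) \<ge> 1 - \<epsilon>"
    proof (cases "unif_prob A n (\<Union>{S\<in>P. good A n D \<epsilon> S}) \<ge> 1 - \<epsilon>")
      case True
      have "card P * 1 \<le> card P * ?R ^ Suc r" by (intro mult_le_mono2) simp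
      then show ?thesis using True P PS by (intro exI[of _ P]) simp
    next
      case False
      obtain P2 where P2: "is_partition (cube A n) P2" "P2 \<subseteq> S_family A n"
        "card P2 \<le> card P * ?R"
        "(\<Sum>X\<in>P2. en D X) \<ge> (\<Sum>X\<in>P. en D X) + \<epsilon> ^ 4 * real (card (cube A n))"
        using step[OF fA Ane e0 e1 P PS False] by blast
      have "(\<Sum>X\<in>P2. en D X) + real r * \<epsilon> ^ 4 * real (card (cube A n)) > real (card (cube A n))"
        using E P2(4) by (simp add: algebra_simps)
      then obtain P' where P': "is_partition (cube A n) P'" "P' \<subseteq> S_family A n"
        "card P' \<le> card P2 * ?R ^ r" "unif_prob A n (\<Union>{S\<in>P'. good A n D \<epsilon> S}) \<ge> 1 - \<epsilon>"
        using Suc.IH P2(1,2) by blast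
      have "card P' \<le> card P * ?R * ?R ^ r" using P'(3) P2(3) by (meson le_trans mult_le_mono1)
      then have "card P' \<le> card P * ?R ^ Suc r" by (simp add: mult.assoc)
      then show ?thesis using P' by blast
    qed
  qed
qed

theorem corollary4p4:
  fixes k :: nat and \<epsilon> :: real
  assumes "k \<ge> 2" and "0 < \<epsilon>" and "\<epsilon> \<le> 1"
  shows "\<exists>N::nat. N > 0 \<and>
    (\<forall>(n::nat) (A::nat set) D. n > 0 \<longrightarrow> finite A \<longrightarrow> card A = k \<longrightarrow> D \<subseteq> cube A n \<longrightarrow>
      (\<exists>(M::nat) P P'. 0 < M \<and> M \<le> N \<and> is_partition (cube A n) P \<and>
         P \<subseteq> S_family A n \<and> card P = M \<and> P' \<subseteq> P \<and>
         unif_prob A n (\<Union>P') \<ge> 1 - \<epsilon> \<and>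
         (\<forall>S\<in>P'. \<forall>T. T \<subseteq> S \<and> T \<in> S_family A n \<and> real (card T) \<ge> \<epsilon> * real (card S) \<longrightarrow>
            \<bar>cond_prob T D - cond_prob S D\<bar> \<le> \<epsilon>)))"
proof -
  define L :: nat where "L = nat \<lceil>1 / \<epsilon> ^ 4\<rceil> + 1"
  define N :: nat where "N = (2 ^ (k * k)) ^ L"
  have e4: "\<epsilon> ^ 4 > 0" using assms by simp
  have "real L \<ge> 1 / \<epsilon> ^ 4 + 1" unfolding L_def by linarith
  then have "real L * \<epsilon> ^ 4 \<ge> (1 / \<epsilon> ^ 4 + 1) * \<epsilon> ^ 4" using e4 by (intro mult_right_mono) auto
  then have "real L * \<epsilon> ^ 4 \<ge> 1 + \<epsilon> ^ 4" using e4 by (simp add: field_simps)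
  then have Le: "real L * \<epsilon> ^ 4 > 1" using e4 by linarith
  have Npos: "N > 0" unfolding N_def by simp
  have main: "\<exists>(M::nat) P P'. 0 < M \<and> M \<le> N \<and> is_partition (cube A n) P \<and>
         P \<subseteq> S_family A n \<and> card P = M \<and> P' \<subseteq> P \<and>
         unif_prob A n (\<Union>P') \<ge> 1 - \<epsilon> \<and>
         (\<forall>S\<in>P'. \<forall>T. T \<subseteq> S \<and> T \<in> S_family A n \<and> real (card T) \<ge> \<epsilon> * real (card S) \<longrightarrow>
            \<bar>cond_prob T D - cond_prob S D\<bar> \<le> \<epsilon>)"
    if fA: "finite A" and cA: "card A = k" for n :: nat and A :: "nat set" and D :: "(nat \<Rightarrow> nat) set"
  proof -
    have Ane: "A \<noteq> {}" using cA assms(1) by auto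
    define U where "U = cube A n"
    have fU: "finite U" unfolding U_def using finite_cube[OF fA] .
    have Une: "U \<noteq> {}" unfolding U_def using cube_ne[OF Ane] .
    have cU: "real (card U) > 0" using fU Une by (simp add: card_gt_0_iff)
    have P0: "is_partition U {U}" unfolding is_partition_def using Une by blast
    have P0S: "{U} \<subseteq> S_family A n" unfolding U_def using cube_in_S by blast
    have en0: "(\<Sum>X\<in>{U}. en D X) \<ge> 0" by (simp add: en_def)
    have "real L * \<epsilon> ^ 4 * real (card U) > 1 * real (card U)"
      using Le cU by (intro mult_strict_right_mono) auto
    then have E0: "(\<Sum>X\<in>{U}. en D X) + real L * \<epsilon> ^ 4 * real (card U) > real (card U)"
      using en0 by linarith
    obtain P where P: "is_partition U P" "P \<subseteq> S_family A n"
      "card P \<le> card {U} * (2 ^ (card A * card A)) ^ L"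
      "unif_prob A n (\<Union>{S\<in>P. good A n D \<epsilon> S}) \<ge> 1 - \<epsilon>"
      using iter[OF fA Ane assms(2) assms(3), where n=n and r=L and D=D, folded U_def] P0 P0S E0 by blast
    have fP: "finite P" using part_finite[OF P(1) fU] .
    have "P \<noteq> {}" using P(1) Une unfolding is_partition_def by auto
    then have Mpos: "0 < card P" using fP by (simp add: card_gt_0_iff)
    have MN: "card P \<le> N" using P(3) cA unfolding N_def by simp
    have X1: "is_partition (cube A n) P" using P(1) unfolding U_def .
    have X2: "{S\<in>P. good A n D \<epsilon> S} \<subseteq> P" by blast
    have X3: "\<forall>S\<in>{S\<in>P. good A n D \<epsilon> S}. \<forall>T. T \<subseteq> S \<and> T \<in> S_family A n \<and> real (card T) \<ge> \<epsilon> * real (card S) \<longrightarrow>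
          \<bar>cond_prob T D - cond_prob S D\<bar> \<le> \<epsilon>" unfolding good_def by blast
    show ?thesis
      by (rule exI[of _ "card P"], rule exI[of _ P], rule exI[of _ "{S\<in>P. good A n D \<epsilon> S}"],
          intro conjI Mpos MN X1 P(2) refl X2 P(4) X3)
  qed
  show ?thesis
    by (rule exI[of _ N], intro conjI Npos allI impI main)
qed

end
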